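(* Let $f:\mathbb N\to\mathbb N$ be defined by $f(n)=\lfloor\varphi n\rfloor+1$ if $n\in R_{0,0}$ and $f(n)=\lfloor(\varphi-1)n\rfloor$ if $n\in R_{1,0}$, and let $\tau:\mathbb N\to\mathbb N$ be defined by $\tau(n)=\lfloor\varphi n+1\rfloor$ if $n\in R_{2,0}$, $\tau(n)=\lfloor\varphi n-1\rfloor$ if $n\in R_{1,0}$, and $\tau(n)=\lfloor(\varphi-1)n+1\rfloor$ if $n\in R_{1,1}$. Both are permutations of $\mathbb N$, and $$f\circ\tau=\tau^{-1}\circ f.$$
   Context: $\mathbb N=\{1,2,\dots\}$, $\varphi=\frac{1+\sqrt5}{2}$, $F$ the Fibonacci numbers ($F(0)=0,F(1)=F(2)=1$). For $i\in\mathbb Z^{\ge0},j\in\mathbb Z$, $R_{i,j}$ is the range of $n\mapsto F(i+1)\lfloor n\varphi\rfloor+F(i)n-j$, $n\in\mathbb N$; $R_{0,0},R_{1,0}$ partition $\mathbb N$, as do $R_{2,0},R_{1,0},R_{1,1}$. *)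

theory Defs
  imports Complex_Main "HOL-Number_Theory.Fib"
begin

definition phi :: real where "phi = (1 + sqrt 5) / 2"

definition R :: "nat \<Rightarrow> int \<Rightarrow> int set" where
  "R i j = {int (fib (Suc i)) * \<lfloor>real n * phi\<rfloor> + int (fib i) * int n - j | n::nat. n \<ge> 1}"

text \<open>The maps f and tau on the positive integers; the value outside the stated
  cases (only n = 0, since the R-sets partition the positive integers) is irrelevant and set to 0.\<close>
definition fmap :: "nat \<Rightarrow> nat" where
  "fmap n = (if int n \<in> R 0 0 then nat (\<lfloor>phi * real n\<rfloor> + 1)
             else if int n \<in> R 1 0 then nat \<lfloor>(phi - 1) * real n\<rfloor>
             else 0)"

definition tau :: "nat \<Rightarrow> nat" where
  "tau n = (if int n \<in> R 2 0 then nat \<lfloor>phi * real n + 1\<rfloor>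
            else if int n \<in> R 1 0 then nat \<lfloor>phi * real n - 1\<rfloor>
            else if int n \<in> R 1 1 then nat \<lfloor>(phi - 1) * real n + 1\<rfloor>
            else 0)"

end

theory Submission
  imports Defs
begin

lemma no5: "(j::nat)^2 = 5 * k^2 \<Longrightarrow> k = 0"
proof (induction k arbitrary: j rule: less_induct)
  case (less k)
  have m: "(j mod 5)^2 mod 5 = 0"
    using less.prems by (metis mod_mult_self1_is_0 power_mod)
  have "j mod 5 < 5" by simp
  then have "j mod 5 = 0" using m
    by (cases "j mod 5"; cases "j mod 5 - 1"; cases "j mod 5 - 2"; cases "j mod 5 - 3"; cases "j mod 5 - 4") (auto simp: power2_eq_square)
  then obtain i where i: "j = 5 * i" by auto
  then have k2: "k^2 = 5 * i^2" using less.prems by (simp add: power2_eq_square)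
  have "(k^2 mod 5) = 0" using k2 by simp
  then have m2: "(k mod 5)^2 mod 5 = 0" by (metis power_mod)
  have "k mod 5 < 5" by simp
  then have "k mod 5 = 0" using m2
    by (cases "k mod 5"; cases "k mod 5 - 1"; cases "k mod 5 - 2"; cases "k mod 5 - 3"; cases "k mod 5 - 4") (auto simp: power2_eq_square)
  then obtain l where l: "k = 5 * l" by auto
  have "i^2 = 5 * l^2" using k2 l by (simp add: power2_eq_square)
  show "k = 0"
  proof (rule ccontr)
    assume "k \<noteq> 0"
    then have "l < k" using l by simp
    with less.IH[OF this \<open>i^2 = 5 * l^2\<close>] l \<open>k \<noteq> 0\<close> show False by simp
  qed
qed

lemma phi_irr: assumes "k \<ge> 1" shows "real k * phi \<noteq> of_int m"
proof
  assume h: "real k * phi = of_int m"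
  have "sqrt 5 = (2 * of_int m - real k) / real k"
    using h assms by (simp add: phi_def field_simps)
  then have "5 = ((2 * of_int m - real k) / real k)^2" by (metis real_sqrt_pow2 zero_le_numeral)
  then have "5 * (real k)^2 = (2 * of_int m - real k)^2" using assms by (simp add: field_simps)
  then have "of_int (5 * (int k)^2) = (of_int ((2*m - int k)^2) :: real)" by simp
  then have "5 * (int k)^2 = (2*m - int k)^2" by linarith
  then have "int (5 * k^2) = int ((nat \<bar>2*m - int k\<bar>)^2)" by simp
  then have "(nat \<bar>2*m - int k\<bar>)^2 = 5 * k^2" by linarith
  then show False using no5 assms by fastforce
qed

lemma phi_gt1: "phi > 1" and phi_lt2: "phi < 2" and phi_sq: "phi * phi = phi + 1"
proof -
  have s1: "sqrt 5 > 1" by (simp add: real_less_rsqrt)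
  have s2: "sqrt 5 < 3"
  proof -
    have "sqrt 5 < sqrt 9" by (rule real_sqrt_less_mono) simp
    moreover have "sqrt 9 = 3" by (rule real_sqrt_unique) auto
    ultimately show ?thesis by simp
  qed
  have s3: "sqrt 5 * sqrt 5 = 5" by simp
  show "phi > 1" using s1 by (simp add: phi_def)
  show "phi < 2" using s2 by (simp add: phi_def)
  show "phi * phi = phi + 1" unfolding phi_def using s3 by (simp add: field_simps)
qed

definition wa :: "nat \<Rightarrow> nat" where "wa n = nat \<lfloor>real n * phi\<rfloor>"
definition wb :: "nat \<Rightarrow> nat" where "wb n = wa n + n"

lemma wa_int: "int (wa n) = \<lfloor>real n * phi\<rfloor>"
  unfolding wa_def using phi_gt1 by simp

lemma wa_real: "real (wa n) = of_int \<lfloor>real n * phi\<rfloor>"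
  by (metis wa_int of_int_of_nat_eq)

lemma wa_lt: "n \<ge> 1 \<Longrightarrow> real (wa n) < real n * phi"
proof -
  assume n: "n \<ge> 1"
  have "real (wa n) \<le> real n * phi" using wa_real[of n] by simp
  moreover have "real (wa n) \<noteq> real n * phi" using phi_irr[OF n, of "\<lfloor>real n * phi\<rfloor>"] wa_real[of n] by metis
  ultimately show ?thesis by simp
qed
lemma wa_gt: "real n * phi < real (wa n) + 1"
  using wa_real[of n] by linarith

lemma wa_ge: "n \<ge> 1 \<Longrightarrow> wa n \<ge> n"
proof -
  assume "n \<ge> 1"
  have "real n * 1 \<le> real n * phi" using phi_gt1 by (intro mult_left_mono) auto
  then have "real n \<le> real n * phi" by simp
  then have "\<lfloor>real n\<rfloor> \<le> \<lfloor>real n * phi\<rfloor>" by (rule floor_mono)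
  then show ?thesis using wa_int[of n] by simp
qed

lemma wa_eqI: "real m \<le> real n * phi \<Longrightarrow> real n * phi < real m + 1 \<Longrightarrow> wa n = m"
proof -
  assume "real m \<le> real n * phi" "real n * phi < real m + 1"
  then have "\<lfloor>real n * phi\<rfloor> = int m" by (simp add: floor_eq_iff)
  then show ?thesis unfolding wa_def by simp
qed

lemma waa: assumes "n \<ge> 1" shows "wa (wa n) + 1 = wb n"
proof -
  define a where "a = real (wa n)"
  define t where "t = real n * phi - a"
  have t0: "t > 0" using wa_lt[OF assms] by (simp add: t_def a_def)
  have t1: "t < 1" using wa_gt[of n] by (simp add: t_def a_def)
  have e: "a * phi = a + real n - t * (phi - 1)"
  proof -
    have "a * phi = (real n * phi - t) * phi" by (simp add: t_def)
    also have "\<dots> = real n * (phi * phi) - t * phi" by (simp add: algebra_simps)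
    also have "\<dots> = a + real n - t * (phi - 1)" by (simp add: phi_sq t_def algebra_simps)
    finally show ?thesis .
  qed
  have p1: "t * (phi - 1) > 0" using t0 phi_gt1 by simp
  have "t * (phi - 1) \<le> 1 * (phi - 1)" using t1 phi_gt1 by (intro mult_right_mono) auto
  then have "t * (phi - 1) \<le> phi - 1" by simp
  then have p2: "t * (phi - 1) < 1" using phi_lt2 by linarith
  have "wa (wa n) = wa n + n - 1"
    apply (rule wa_eqI) using e p1 p2 wa_ge[OF assms] assms unfolding a_def by auto
  then show ?thesis unfolding wb_def using wa_ge[OF assms] assms by simp
qed

lemma wab: assumes "n \<ge> 1" shows "wa (wb n) = wa n + wb n"
proof -
  define a where "a = real (wa n)"
  define t where "t = real n * phi - a"
  have t0: "t > 0" using wa_lt[OF assms] by (simp add: t_def a_def)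
  have t1: "t < 1" using wa_gt[of n] by (simp add: t_def a_def)
  have e: "(a + real n) * phi = 2 * a + real n + t * (2 - phi)"
  proof -
    have "(a + real n) * phi = (real n * phi - t) * phi + real n * phi" by (simp add: t_def algebra_simps)
    also have "\<dots> = real n * (phi * phi) - t * phi + real n * phi" by (simp add: algebra_simps)
    also have "\<dots> = 2 * a + real n + t * (2 - phi)" by (simp add: phi_sq t_def algebra_simps)
    finally show ?thesis .
  qed
  have p1: "t * (2 - phi) > 0" using t0 phi_lt2 by simp
  have "t * (2 - phi) \<le> 1 * (2 - phi)" using t1 phi_lt2 by (intro mult_right_mono) auto
  then have "t * (2 - phi) \<le> 2 - phi" by simp
  then have p2: "t * (2 - phi) < 1" using phi_gt1 by linarith
  show ?thesis
    apply (rule wa_eqI) using e p1 p2 unfolding a_def wb_def by auto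
qed

lemma wa_pos: "n \<ge> 1 \<Longrightarrow> wa n \<ge> 1" using wa_ge by fastforce
lemma wb_pos: "n \<ge> 1 \<Longrightarrow> wb n \<ge> 1" unfolding wb_def by simp

lemma wa_smono: assumes "m < n" shows "wa m < wa n"
proof -
  have "real m * phi + 1 \<le> real n * phi"
  proof -
    have "real n - real m \<ge> 1" using assms by linarith
    then have "(real n - real m) * 1 \<le> (real n - real m) * phi" using phi_gt1 by (intro mult_left_mono) auto
    then have "1 \<le> (real n - real m) * phi" using \<open>real n - real m \<ge> 1\<close> by (metis mult.right_neutral order_trans)
    then show ?thesis by (simp add: algebra_simps)
  qed
  then have "\<lfloor>real m * phi + 1\<rfloor> \<le> \<lfloor>real n * phi\<rfloor>" by (rule floor_mono)
  then have "int (wa m) + 1 \<le> int (wa n)" using wa_int[of m] wa_int[of n] by simp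
  then show ?thesis by simp
qed

lemma wa_inj: "wa m = wa n \<Longrightarrow> m = n"
  using wa_smono by (metis linorder_neqE_nat less_irrefl)

lemma wb_inj: "wb m = wb n \<Longrightarrow> m = n"
  unfolding wb_def using wa_smono by (metis add_less_mono linorder_neqE_nat less_irrefl)

lemma partition: assumes m: "m \<ge> 1" shows "(\<exists>k\<ge>1. m = wa k) \<or> (\<exists>k\<ge>1. m = wb k)"
proof -
  define k where "k = nat \<lfloor>real (m+1) / phi\<rfloor>"
  have kr: "real k = of_int \<lfloor>real (m+1) / phi\<rfloor>" unfolding k_def using phi_gt1 by simp
  have k1: "real k \<le> real (m+1) / phi" using kr by simp
  have k2: "real k > real (m+1) / phi - 1" using kr by linarith
  have ph0: "phi > 0" using phi_gt1 by simp
  have x1: "real k * phi \<le> real (m+1)" using k1 ph0 by (simp add: field_simps)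
  have x2: "real k * phi > real (m+1) - phi" using k2 ph0 by (simp add: field_simps)
  show ?thesis
  proof (cases "real k * phi \<ge> real m")
    case True
    have "k \<noteq> 0" using True m by (cases k) auto
    then have kk: "k \<ge> 1" by simp
    have "real k * phi \<noteq> of_int (int (m+1))" using phi_irr[OF kk] by blast
    then have "real k * phi < real m + 1" using x1 by simp
    then have "wa k = m" using True by (intro wa_eqI) auto
    then show ?thesis using kk by auto
  next
    case False
    have "real k \<le> real k * phi" using phi_gt1 by (simp add: mult_le_cancel_left1)
    then have km: "k < m" using False by simp
    define j where "j = m - k"
    have jr: "real j = real m - real k" using km by (simp add: j_def of_nat_diff)
    have e: "real j * phi = real m * phi - real k * phi" unfolding jr by (rule left_diff_distrib)
    have kk: "real k * phi * phi = real k * phi + real k"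
    by (metis mult.assoc phi_sq distrib_left mult.right_neutral)
    have a1: "real k * phi * phi \<le> real m * phi" using False ph0 by (intro mult_right_mono) auto
    have a2: "real k * phi * phi > (real (m+1) - phi) * phi" using x2 ph0 by (intro mult_strict_right_mono) auto
    have a3: "(real (m+1) - phi) * phi = real m * phi - 1"
      by (simp add: algebra_simps phi_sq)
    have "wa j = k"
      by (rule wa_eqI) (use e kk a1 a2 a3 in linarith)+
    then have "wb j = m" unfolding wb_def j_def using km by simp
    moreover have "j \<ge> 1" using km j_def by simp
    ultimately show ?thesis by auto
  qed
qed

lemma disj: assumes "k \<ge> 1" "j \<ge> 1" shows "wa k \<noteq> wb j"
proof
  assume h: "wa k = wb j"
  define m where "m = wa k"
  define X where "X = real k * phi"
  define Y where "Y = real j * phi + real j"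
  have X1: "real m < X" using wa_lt[OF assms(1)] by (simp add: m_def X_def)
  have X2: "X < real m + 1" using wa_gt[of k] by (simp add: m_def X_def)
  have Y1: "real m < Y" using wa_lt[OF assms(2)] h by (simp add: m_def Y_def wb_def)
  have Y2: "Y < real m + 1" using wa_gt[of j] h by (simp add: m_def Y_def wb_def)
  have kX: "X * (phi - 1) = real k"
  proof -
    have "X * (phi - 1) = real k * (phi * phi) - real k * phi" unfolding X_def by (simp add: algebra_simps)
    then show ?thesis by (simp add: phi_sq algebra_simps)
  qed
  have jY: "Y * (2 - phi) = real j"
  proof -
    have "Y * (2 - phi) = real j * (phi + 2 - phi * phi)" unfolding Y_def by (simp add: algebra_simps)
    then show ?thesis by (simp add: phi_sq)
  qed
  have p1: "phi - 1 > 0" and p2: "2 - phi > 0" using phi_gt1 phi_lt2 by auto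
  have "real m * (phi - 1) < X * (phi - 1)" using X1 p1 by (intro mult_strict_right_mono)
  moreover have "X * (phi - 1) < (real m + 1) * (phi - 1)" using X2 p1 by (intro mult_strict_right_mono)
  moreover have "real m * (2 - phi) < Y * (2 - phi)" using Y1 p2 by (intro mult_strict_right_mono)
  moreover have "Y * (2 - phi) < (real m + 1) * (2 - phi)" using Y2 p2 by (intro mult_strict_right_mono)
  ultimately have "real m < real k + real j" "real k + real j < real m + 1"
    using kX jY by (simp_all add: algebra_simps)
  then have "m < k + j" "k + j < m + 1" by linarith+
  then show False by simp
qed

lemma fib23: "fib 2 = 1" "fib 3 = 2" by (simp_all add: numeral_eq_Suc)

lemma wa_int': "\<lfloor>real n * phi\<rfloor> = int (wa n)" using wa_int by simp

lemma R00: "int m \<in> R 0 0 \<longleftrightarrow> (\<exists>n\<ge>1. m = wa n)"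
  by (auto simp: R_def wa_int')

lemma R10: "int m \<in> R 1 0 \<longleftrightarrow> (\<exists>n\<ge>1. m = wb n)"
  by (auto simp: R_def wa_int' fib23 wb_def)

lemma R20: "int m \<in> R 2 0 \<longleftrightarrow> (\<exists>n\<ge>1. m = wa (wb n))"
proof -
  have e: "int (fib 3) * \<lfloor>real n * phi\<rfloor> + int (fib 2) * int n - 0 = int (wa (wb n))" if "n \<ge> 1" for n
    using wab[OF that] by (simp add: fib23 wa_int' wb_def)
  show ?thesis
  proof
    assume "int m \<in> R 2 0"
    then obtain n where n: "n \<ge> 1" "int m = int (fib (Suc 2)) * \<lfloor>real n * phi\<rfloor> + int (fib 2) * int n - 0"
      unfolding R_def by blast
    then show "\<exists>n\<ge>1. m = wa (wb n)" using e[OF n(1)] by (intro exI[of _ n]) (simp add: eval_nat_numeral)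
  next
    assume "\<exists>n\<ge>1. m = wa (wb n)"
    then obtain n where n: "n \<ge> 1" "m = wa (wb n)" by blast
    then have "int m = int (fib (Suc 2)) * \<lfloor>real n * phi\<rfloor> + int (fib 2) * int n - 0"
      using e[OF n(1)] by (simp add: eval_nat_numeral)
    then show "int m \<in> R 2 0" unfolding R_def using n(1) by blast
  qed
qed

lemma R11: "int m \<in> R 1 1 \<longleftrightarrow> (\<exists>n\<ge>1. m = wa (wa n))"
proof -
  have e: "int (fib 2) * \<lfloor>real n * phi\<rfloor> + int (fib 1) * int n - 1 = int (wa (wa n))" if "n \<ge> 1" for n
    using waa[OF that] by (simp add: fib23 wa_int' wb_def)
  show ?thesis
  proof
    assume "int m \<in> R 1 1"
    then obtain n where n: "n \<ge> 1" "int m = int (fib (Suc 1)) * \<lfloor>real n * phi\<rfloor> + int (fib 1) * int n - 1"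
      unfolding R_def by blast
    then show "\<exists>n\<ge>1. m = wa (wa n)" using e[OF n(1)] by (intro exI[of _ n]) (simp add: eval_nat_numeral)
  next
    assume "\<exists>n\<ge>1. m = wa (wa n)"
    then obtain n where n: "n \<ge> 1" "m = wa (wa n)" by blast
    then have "int m = int (fib (Suc 1)) * \<lfloor>real n * phi\<rfloor> + int (fib 1) * int n - 1"
      using e[OF n(1)] by (simp add: eval_nat_numeral)
    then show "int m \<in> R 1 1" unfolding R_def using n(1) by blast
  qed
qed

lemma fl0: "\<lfloor>phi * real x\<rfloor> = int (wa x)" using wa_int' by (simp add: mult.commute)
lemma fl1: "nat (\<lfloor>phi * real x\<rfloor> + 1) = wa x + 1" by (simp add: fl0)
lemma fl3: "nat \<lfloor>phi * real x + 1\<rfloor> = wa x + 1" by (simp add: fl0)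
lemma fl4: "x \<ge> 1 \<Longrightarrow> nat \<lfloor>phi * real x - 1\<rfloor> = wa x - 1" using wa_pos[of x] by (simp add: fl0)
lemma fl2: assumes "x \<ge> 1" shows "nat \<lfloor>(phi - 1) * real x\<rfloor> = wa x - x"
proof -
  have "(phi - 1) * real x = phi * real x - of_int (int x)" by (simp add: algebra_simps)
  then have "\<lfloor>(phi - 1) * real x\<rfloor> = int (wa x) - int x" by (simp only: floor_diff_of_int fl0)
  then show ?thesis using wa_ge[OF assms] by simp
qed
lemma fl5: assumes "x \<ge> 1" shows "nat \<lfloor>(phi - 1) * real x + 1\<rfloor> = wa x - x + 1"
proof -
  have "(phi - 1) * real x + 1 = phi * real x - of_int (int x - 1)" by (simp add: algebra_simps)
  then have "\<lfloor>(phi - 1) * real x + 1\<rfloor> = int (wa x) - int x + 1" by (simp only: floor_diff_of_int fl0)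
  then show ?thesis using wa_ge[OF assms] by simp
qed

lemma f_a: "n \<ge> 1 \<Longrightarrow> fmap (wa n) = wb n"
  unfolding fmap_def using R00[of "wa n"] fl1 waa by auto

lemma f_b: assumes "n \<ge> 1" shows "fmap (wb n) = wa n"
proof -
  have "int (wb n) \<notin> R 0 0" using R00 disj assms by (metis)
  moreover have "int (wb n) \<in> R 1 0" using R10 assms by auto
  ultimately show ?thesis unfolding fmap_def using fl2[OF wb_pos[OF assms]] wab[OF assms] by simp
qed

lemma t_ab: assumes "n \<ge> 1" shows "tau (wa (wb n)) = wb (wb n)"
proof -
  have "int (wa (wb n)) \<in> R 2 0" using R20 assms by auto
  then show ?thesis unfolding tau_def using fl3 waa[OF wb_pos[OF assms]] by simp
qed

lemma t_b: assumes "n \<ge> 1" shows "tau (wb n) = wb (wa n)"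
proof -
  have "int (wb n) \<notin> R 2 0" using R20 disj assms wb_pos by metis
  moreover have "int (wb n) \<in> R 1 0" using R10 assms by auto
  ultimately show ?thesis unfolding tau_def using fl4[OF wb_pos[OF assms]] wab[OF assms] waa[OF assms] wa_pos[OF assms]
    by (simp add: wb_def)
qed

lemma t_aa: assumes "n \<ge> 1" shows "tau (wa (wa n)) = wa n"
proof -
  have "int (wa (wa n)) \<notin> R 2 0" using R20 disj assms wa_inj by metis
  moreover have "int (wa (wa n)) \<notin> R 1 0" using R10 disj assms wa_pos by metis
  moreover have "int (wa (wa n)) \<in> R 1 1" using R11 assms by auto
  ultimately show ?thesis unfolding tau_def using fl5[OF wa_pos[OF wa_pos[OF assms]]] waa[OF wa_pos[OF assms]]
      wa_ge[OF wa_pos[OF wa_pos[OF assms]]] by (simp add: wb_def)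
qed

lemma cls3: assumes "n \<ge> 1"
  shows "(\<exists>x\<ge>1. n = wa (wa x)) \<or> (\<exists>x\<ge>1. n = wa (wb x)) \<or> (\<exists>x\<ge>1. n = wb x)"
proof -
  from partition[OF assms] show ?thesis
  proof
    assume "\<exists>k\<ge>1. n = wa k"
    then obtain k where k: "k \<ge> 1" "n = wa k" by blast
    from partition[OF k(1)] show ?thesis using k by blast
  qed blast
qed

lemma fpos: "n \<ge> 1 \<Longrightarrow> fmap n \<ge> 1"
  using partition f_a f_b wa_pos wb_pos by metis

lemma tpos: "n \<ge> 1 \<Longrightarrow> tau n \<ge> 1"
  using cls3 t_aa t_ab t_b wa_pos wb_pos by metis

lemma ff: "n \<ge> 1 \<Longrightarrow> fmap (fmap n) = n"
  using partition f_a f_b by metis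

lemma tau_inj: "inj_on tau {1..}"
proof (rule inj_onI)
  fix n1 n2 :: nat assume h1: "n1 \<in> {1..}" and h2: "n2 \<in> {1..}" and e: "tau n1 = tau n2"
  have A: "\<And>x y. x \<ge> 1 \<Longrightarrow> y \<ge> 1 \<Longrightarrow> wa x \<noteq> wb y" using disj by blast
  from cls3[of n1] h1 cls3[of n2] h2 show "n1 = n2"
    using e t_aa t_ab t_b wa_inj wb_inj A wa_pos wb_pos
    by (smt (verit) atLeast_iff)
qed

lemma tau_surj: "m \<ge> 1 \<Longrightarrow> \<exists>n\<ge>1. tau n = m"
proof -
  assume m: "m \<ge> 1"
  from partition[OF m] show ?thesis
  proof
    assume "\<exists>k\<ge>1. m = wa k"
    then obtain k where "k \<ge> 1" "m = wa k" by blast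
    then show ?thesis using t_aa wa_pos by metis
  next
    assume "\<exists>k\<ge>1. m = wb k"
    then obtain k where k: "k \<ge> 1" "m = wb k" by blast
    from partition[OF k(1)] show ?thesis using k t_b t_ab wa_pos wb_pos by metis
  qed
qed

lemma tfT: "n \<ge> 1 \<Longrightarrow> tau (fmap (tau n)) = fmap n"
proof -
  assume n: "n \<ge> 1"
  from cls3[OF n] show ?thesis
  proof (elim disjE exE conjE)
    fix x assume x: "x \<ge> 1" "n = wa (wa x)"
    then show ?thesis using t_aa f_a t_b f_b wa_pos by simp
  next
    fix x assume x: "x \<ge> 1" "n = wa (wb x)"
    then show ?thesis using t_ab f_a f_b t_ab wb_pos by simp
  next
    fix x assume x: "x \<ge> 1" "n = wb x"
    then show ?thesis using t_b f_b f_a t_aa wa_pos by simp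
  qed
qed

theorem theorem4p8:
  shows "bij_betw fmap {1..} {1..} \<and> bij_betw tau {1..} {1..} \<and>
         (\<forall>n\<ge>1. fmap (tau n) = inv_into {1..} tau (fmap n))"
proof (intro conjI allI impI)
  show "bij_betw fmap {1..} {1..}"
    by (rule bij_betw_byWitness[where f'=fmap]) (use ff fpos in force)+
  show "bij_betw tau {1..} {1..}"
    unfolding bij_betw_def
  proof
    show "inj_on tau {1..}" by (rule tau_inj)
    show "tau ` {1..} = {1..}"
      using tpos tau_surj by (auto simp: image_iff)
  qed
  fix n :: nat assume n: "n \<ge> 1"
  show "fmap (tau n) = inv_into {1..} tau (fmap n)"
    by (rule inv_into_f_eq[symmetric, OF tau_inj]) (use n tfT fpos tpos in auto)
qed

end
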